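(* Let $f:\mathbb{R}^2\to\mathbb{C}$ be smooth and let $Q=I_1\times I_2$ be a rectangle in $\mathbb{R}^2$ ($I_1,I_2$ bounded intervals). For $\alpha=(\alpha_1,\alpha_2)\in\mathbb{Z}^2$ let $Q(\alpha)=\{(x_1,x_2):|I_i|\alpha_i-\tfrac{|I_i|}{2}\le x_i<|I_i|\alpha_i+\tfrac{|I_i|}{2},\ i=1,2\}$. Then there is an absolute constant $C$, independent of $Q$ and $f$, such that $$\sum_{\alpha\in\mathbb{Z}^2}\sup_{Q(\alpha)}|f|^2\le C\Big(\frac{|I_1|}{|I_2|}\int_{\mathbb{R}^2}|\partial_1 f|^2+|Q|\int_{\mathbb{R}^2}|\partial_2\partial_1 f|^2+\frac{|I_2|}{|I_1|}\int_{\mathbb{R}^2}|\partial_2 f|^2+\frac{1}{|Q|}\int_{\mathbb{R}^2}|f|^2\Big).$$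
   Context: $|I|$ denotes the length of an interval and $|Q|=|I_1||I_2|$ the area of $Q$. *)

theory Defs
  imports "HOL-Analysis.Analysis"
begin

fun Ck :: "nat \<Rightarrow> (real \<times> real \<Rightarrow> complex) \<Rightarrow> bool" where
  "Ck 0 f = continuous_on UNIV f"
| "Ck (Suc k) f = (\<exists>f'. (\<forall>x. (f has_derivative f' x) (at x)) \<and> (\<forall>v. Ck k (\<lambda>x. f' x v)))"

definition smooth :: "(real \<times> real \<Rightarrow> complex) \<Rightarrow> bool" where
  "smooth f = (\<forall>k. Ck k f)"

definition d1 :: "(real \<times> real \<Rightarrow> complex) \<Rightarrow> real \<times> real \<Rightarrow> complex" where
  "d1 f = (\<lambda>(x1, x2). vector_derivative (\<lambda>t. f (t, x2)) (at x1))"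

definition d2 :: "(real \<times> real \<Rightarrow> complex) \<Rightarrow> real \<times> real \<Rightarrow> complex" where
  "d2 f = (\<lambda>(x1, x2). vector_derivative (\<lambda>t. f (x1, t)) (at x2))"

definition Qa :: "real \<Rightarrow> real \<Rightarrow> int \<times> int \<Rightarrow> (real \<times> real) set" where
  "Qa l1 l2 \<alpha> = {(x1, x2).
     l1 * of_int (fst \<alpha>) - l1 / 2 \<le> x1 \<and> x1 < l1 * of_int (fst \<alpha>) + l1 / 2 \<and>
     l2 * of_int (snd \<alpha>) - l2 / 2 \<le> x2 \<and> x2 < l2 * of_int (snd \<alpha>) + l2 / 2}"

end

theory Submission
  imports Defs
begin


lemma amgm_aux:
  fixes p q c :: real assumes "c > 0"
  shows "2*p*q \<le> p^2/c + c*q^2"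
proof -
  have "0 \<le> (p - c*q)^2" by simp
  hence "2*c*p*q \<le> p^2 + c^2*q^2" by (simp add: power2_eq_square algebra_simps)
  hence "c*(2*p*q) \<le> c*(p^2/c + c*q^2)" using assms by (simp add: algebra_simps power2_eq_square)
  thus ?thesis using assms by (simp add: mult_le_cancel_left_pos)
qed

lemma one_dim:
  fixes g g' :: "real \<Rightarrow> complex"
  assumes der: "\<And>t. (g has_vector_derivative g' t) (at t)"
    and cg': "continuous_on UNIV g'" and ab: "a < b" and x: "x \<in> {a..b}"
  shows "(cmod (g x))^2 \<le> (2/(b-a)) * integral {a..b} (\<lambda>t. (cmod (g t))^2)
           + (b-a) * integral {a..b} (\<lambda>t. (cmod (g' t))^2)"
proof -
  define l where "l = b - a"
  have l: "l > 0" using ab l_def by simp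
  have cg: "continuous_on UNIV g" using der
    by (meson continuous_at_imp_continuous_on has_vector_derivative_continuous)
  define h where "h t = (cmod (g t))^2" for t
  define h' where "h' t = 2 * inner (g t) (g' t)" for t
  define k where "k t = (cmod (g t))^2 / l + l * (cmod (g' t))^2" for t
  have hder: "(h has_vector_derivative h' t) (at t within S)" for t S
  proof -
    have d: "(g has_derivative (\<lambda>u. u *\<^sub>R g' t)) (at t within S)"
      using der[of t] by (simp add: has_vector_derivative_def has_derivative_at_withinI)
    have "((\<lambda>t. inner (g t) (g t)) has_derivative
        (\<lambda>u. inner (g t) (u *\<^sub>R g' t) + inner (u *\<^sub>R g' t) (g t))) (at t within S)"
      by (rule has_derivative_inner[OF d d])
    moreover have "(\<lambda>u. inner (g t) (u *\<^sub>R g' t) + inner (u *\<^sub>R g' t) (g t)) = (\<lambda>u. u *\<^sub>R h' t)"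
      by (auto simp: h'_def inner_commute algebra_simps)
    moreover have "(\<lambda>t. inner (g t) (g t)) = h"
      by (auto simp: h_def power2_norm_eq_inner)
    ultimately show ?thesis by (simp add: has_vector_derivative_def)
  qed
  have ch: "continuous_on S h" for S unfolding h_def
    by (intro continuous_intros continuous_on_subset[OF cg]) auto
  have ch': "continuous_on S h'" for S unfolding h'_def
    by (intro continuous_intros continuous_on_subset[OF cg] continuous_on_subset[OF cg']) auto
  have ck: "continuous_on S k" for S unfolding k_def
    by (intro continuous_intros continuous_on_subset[OF cg] continuous_on_subset[OF cg']) (use l in auto)
  have hk: "\<bar>h' t\<bar> \<le> k t" for t
  proof -
    have "\<bar>h' t\<bar> \<le> 2 * cmod (g t) * cmod (g' t)"
      unfolding h'_def using Cauchy_Schwarz_ineq2[of "g t" "g' t"] by simp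
    also have "\<dots> \<le> k t" unfolding k_def by (rule amgm_aux[OF l])
    finally show ?thesis .
  qed
  have k0: "0 \<le> k t" for t using hk[of t] by linarith
  define K where "K = integral {a..b} k"
  have intk: "k integrable_on {u..v}" for u v by (rule integrable_continuous_interval[OF ck])
  have inth': "h' integrable_on {u..v}" for u v by (rule integrable_continuous_interval[OF ch'])
  have inth: "h integrable_on {u..v}" for u v by (rule integrable_continuous_interval[OF ch])
  have key: "h x \<le> h y + K" if y: "y \<in> {a..b}" for y
  proof (cases "y \<le> x")
    case True
    have "(h' has_integral (h x - h y)) {y..x}"
      by (rule fundamental_theorem_of_calculus[OF True]) (rule hder)
    hence "h x - h y = integral {y..x} h'" by (simp add: integral_unique)
    also have "\<dots> \<le> integral {y..x} k"
      by (rule integral_le[OF inth' intk]) (use hk in \<open>smt (verit) abs_ge_self abs_minus_cancel abs_le_D2\<close>)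
    also have "\<dots> \<le> K" unfolding K_def
      by (rule integral_subset_le[OF _ intk intk]) (use x y k0 in auto)
    finally show ?thesis by simp
  next
    case False
    hence yx: "x \<le> y" by simp
    have "(h' has_integral (h y - h x)) {x..y}"
      by (rule fundamental_theorem_of_calculus[OF yx]) (rule hder)
    hence "h x - h y = integral {x..y} (\<lambda>t. - h' t)" by (simp add: integral_unique integral_neg)
    also have "\<dots> \<le> integral {x..y} k"
      by (rule integral_le[OF integrable_neg[OF inth'] intk]) (use hk in \<open>smt (verit) abs_ge_self abs_minus_cancel abs_le_D2\<close>)
    also have "\<dots> \<le> K" unfolding K_def
      by (rule integral_subset_le[OF _ intk intk]) (use x y k0 in auto)
    finally show ?thesis by simp
  qed
  have "integral {a..b} (\<lambda>y. h x) \<le> integral {a..b} (\<lambda>y. h y + K)"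
    by (rule integral_le) (use key inth in \<open>auto intro!: integrable_add\<close>)
  moreover have "integral {a..b} (\<lambda>y. h y + K) = integral {a..b} h + (b-a) * K"
    using ab by (subst integral_add) (auto simp: inth)
  ultimately have "l * h x \<le> integral {a..b} h + l * K"
    using ab by (simp add: l_def)
  hence "h x \<le> integral {a..b} h / l + K" using l
    by (simp add: field_simps)
  also have "K = integral {a..b} h / l + l * integral {a..b} (\<lambda>t. (cmod (g' t))^2)"
  proof -
    have i2: "(\<lambda>t. (cmod (g' t))^2) integrable_on {a..b}"
      by (intro integrable_continuous_interval continuous_intros continuous_on_subset[OF cg']) auto
    have i1: "(\<lambda>t. (cmod (g t))^2 / l) integrable_on {a..b}"
      using inth[of a b] unfolding h_def by (rule integrable_on_divide)
    have i3: "(\<lambda>t. l * (cmod (g' t))^2) integrable_on {a..b}"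
      by (intro integrable_continuous_interval continuous_intros continuous_on_subset[OF cg']) auto
    show ?thesis unfolding K_def k_def
      by (subst integral_add[OF i1 i3]) (simp add: h_def[abs_def])
  qed
  finally have fin: "h x \<le> integral {a..b} h / l + (integral {a..b} h / l + l * integral {a..b} (\<lambda>t. (cmod (g' t))^2))" .
  have "integral {a..b} h / l + (integral {a..b} h / l) = (2/l) * integral {a..b} h" by simp
  with fin have "h x \<le> (2/l) * integral {a..b} h + l * integral {a..b} (\<lambda>t. (cmod (g' t))^2)" by linarith
  thus ?thesis by (simp add: h_def[abs_def] l_def)
qed

lemma nn_ico:
  fixes \<phi> :: "real \<Rightarrow> real"
  assumes c: "continuous_on UNIV \<phi>" and nn: "\<And>t. 0 \<le> \<phi> t" and ab: "a \<le> b"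
  shows "(\<integral>\<^sup>+t. indicator {a..<b} t * ennreal (\<phi> t) \<partial>lborel) = ennreal (integral {a..b} \<phi>)"
proof -
  have "(\<phi> has_integral integral {a..b} \<phi>) {a..b}"
    by (intro integrable_integral integrable_continuous_interval continuous_on_subset[OF c]) auto
  hence "(\<phi> has_integral integral {a..b} \<phi>) {a..<b}"
    by (rule has_integral_spike_set_eq[THEN iffD1, rotated -1])
       (auto intro: negligible_subset[of "{b}"])
  hence "(\<integral>\<^sup>+ x. ennreal (indicator {a..<b} x * \<phi> x) \<partial>lborel) = ennreal (integral {a..b} \<phi>)"
    by (rule nn_integral_has_integral_lebesgue[rotated]) (use nn in auto)
  thus ?thesis by (simp add: indicator_mult_ennreal)
qed

lemma one_dim_nn:
  fixes g g' :: "real \<Rightarrow> complex"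
  assumes der: "\<And>t. (g has_vector_derivative g' t) (at t)"
    and cg': "continuous_on UNIV g'" and ab: "a < b" and x: "x \<in> {a..b}"
  shows "ennreal ((cmod (g x))^2) \<le>
     ennreal (2/(b-a)) * (\<integral>\<^sup>+t. indicator {a..<b} t * ennreal ((cmod (g t))^2) \<partial>lborel)
   + ennreal (b-a) * (\<integral>\<^sup>+t. indicator {a..<b} t * ennreal ((cmod (g' t))^2) \<partial>lborel)"
proof -
  have cg: "continuous_on UNIV g" using der
    by (meson continuous_at_imp_continuous_on has_vector_derivative_continuous)
  have e1: "(\<integral>\<^sup>+t. indicator {a..<b} t * ennreal ((cmod (g t))^2) \<partial>lborel)
      = ennreal (integral {a..b} (\<lambda>t. (cmod (g t))^2))"
    by (rule nn_ico) (use ab in \<open>auto intro!: continuous_intros cg\<close>)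
  have e2: "(\<integral>\<^sup>+t. indicator {a..<b} t * ennreal ((cmod (g' t))^2) \<partial>lborel)
      = ennreal (integral {a..b} (\<lambda>t. (cmod (g' t))^2))"
    by (rule nn_ico) (use ab in \<open>auto intro!: continuous_intros cg'\<close>)
  have i1: "0 \<le> integral {a..b} (\<lambda>t. (cmod (g t))^2)"
    by (rule integral_nonneg) (auto intro!: integrable_continuous_interval continuous_intros continuous_on_subset[OF cg])
  have i2: "0 \<le> integral {a..b} (\<lambda>t. (cmod (g' t))^2)"
    by (rule integral_nonneg) (auto intro!: integrable_continuous_interval continuous_intros continuous_on_subset[OF cg'])
  have "ennreal ((cmod (g x))^2) \<le> ennreal ((2/(b-a)) * integral {a..b} (\<lambda>t. (cmod (g t))^2)
           + (b-a) * integral {a..b} (\<lambda>t. (cmod (g' t))^2))"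
    by (rule ennreal_leI, rule one_dim[OF der cg' ab x])
  also have "\<dots> = ennreal (2/(b-a)) * ennreal (integral {a..b} (\<lambda>t. (cmod (g t))^2))
     + ennreal (b-a) * ennreal (integral {a..b} (\<lambda>t. (cmod (g' t))^2))"
    using ab i1 i2 by (simp add: ennreal_plus[symmetric] ennreal_mult[symmetric] del: ennreal_plus)
  finally show ?thesis by (simp add: e1 e2)
qed


lemma partial1:
  fixes F :: "real \<times> real \<Rightarrow> complex"
  assumes D: "\<And>x. (F has_derivative F' x) (at x)"
  shows "((\<lambda>t. F (t,s)) has_vector_derivative F' (t,s) (1,0)) (at t)"
proof -
  have p: "((\<lambda>t. (t,s)) has_derivative (\<lambda>h. (h,0))) (at t)"
    by (auto intro!: derivative_eq_intros)
  have "(F \<circ> (\<lambda>t. (t,s)) has_derivative F' (t,s) \<circ> (\<lambda>h. (h,0))) (at t)"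
    by (rule diff_chain_at[OF p]) (simp add: D)
  moreover have "F' (t,s) \<circ> (\<lambda>h. (h,0)) = (\<lambda>h. h *\<^sub>R F' (t,s) (1,0))"
  proof
    fix h :: real
    have "linear (F' (t,s))" using D by (rule has_derivative_linear)
    hence "F' (t,s) (h *\<^sub>R (1,0)) = h *\<^sub>R F' (t,s) (1,0)" by (rule linear_cmul)
    thus "(F' (t,s) \<circ> (\<lambda>h. (h,0))) h = h *\<^sub>R F' (t,s) (1,0)" by simp
  qed
  ultimately show ?thesis by (simp add: has_vector_derivative_def o_def)
qed

lemma partial2:
  fixes F :: "real \<times> real \<Rightarrow> complex"
  assumes D: "\<And>x. (F has_derivative F' x) (at x)"
  shows "((\<lambda>s. F (t,s)) has_vector_derivative F' (t,s) (0,1)) (at s)"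
proof -
  have p: "((\<lambda>s. (t,s)) has_derivative (\<lambda>h. (0,h))) (at s)"
    by (auto intro!: derivative_eq_intros)
  have "(F \<circ> (\<lambda>s. (t,s)) has_derivative F' (t,s) \<circ> (\<lambda>h. (0,h))) (at s)"
    by (rule diff_chain_at[OF p]) (simp add: D)
  moreover have "F' (t,s) \<circ> (\<lambda>h. (0,h)) = (\<lambda>h. h *\<^sub>R F' (t,s) (0,1))"
  proof
    fix h :: real
    have "linear (F' (t,s))" using D by (rule has_derivative_linear)
    hence "F' (t,s) (h *\<^sub>R (0,1)) = h *\<^sub>R F' (t,s) (0,1)" by (rule linear_cmul)
    thus "(F' (t,s) \<circ> (\<lambda>h. (0,h))) h = h *\<^sub>R F' (t,s) (0,1)" by simp
  qed
  ultimately show ?thesis by (simp add: has_vector_derivative_def o_def)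
qed

lemma d1_eq:
  assumes D: "\<And>x. (F has_derivative F' x) (at x)"
  shows "d1 F = (\<lambda>x. F' x (1,0))"
  by (auto simp: d1_def intro!: vector_derivative_at partial1 D)

lemma d2_eq:
  assumes D: "\<And>x. (F has_derivative F' x) (at x)"
  shows "d2 F = (\<lambda>x. F' x (0,1))"
  by (auto simp: d2_def intro!: vector_derivative_at partial2 D)

lemma cont_of_der:
  assumes "\<And>x. (F has_derivative F' x) (at x)"
  shows "continuous_on UNIV F"
  using assms by (meson continuous_at_imp_continuous_on has_derivative_continuous)

lemma smooth_props:
  assumes "smooth f"
  shows "continuous_on UNIV f \<and> continuous_on UNIV (d1 f) \<and> continuous_on UNIV (d2 f)
    \<and> continuous_on UNIV (d2 (d1 f))
    \<and> (\<forall>t s. ((\<lambda>t. f (t,s)) has_vector_derivative d1 f (t,s)) (at t))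
    \<and> (\<forall>t s. ((\<lambda>s. f (t,s)) has_vector_derivative d2 f (t,s)) (at s))
    \<and> (\<forall>t s. ((\<lambda>s. d1 f (t,s)) has_vector_derivative d2 (d1 f) (t,s)) (at s))"
proof -
  have "Ck (Suc (Suc 0)) f" using assms unfolding smooth_def by blast
  then obtain f' where D: "\<And>x. (f has_derivative f' x) (at x)"
    and C1: "\<And>v. Ck (Suc 0) (\<lambda>x. f' x v)" by auto
  obtain g where G: "\<And>x. ((\<lambda>x. f' x (1,0)) has_derivative g x) (at x)"
    and Gc: "\<And>w. continuous_on UNIV (\<lambda>x. g x w)" using C1[of "(1,0)"] by auto
  obtain k where K: "\<And>x. ((\<lambda>x. f' x (0,1)) has_derivative k x) (at x)"
    using C1[of "(0,1)"] by auto
  have e1: "d1 f = (\<lambda>x. f' x (1,0))" by (rule d1_eq[OF D])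
  have e2: "d2 f = (\<lambda>x. f' x (0,1))" by (rule d2_eq[OF D])
  have e12: "d2 (d1 f) = (\<lambda>x. g x (0,1))" unfolding e1 by (rule d2_eq[OF G])
  show ?thesis
    unfolding e12
    apply (intro conjI allI)
    using cont_of_der[OF D] apply simp
    using cont_of_der[OF G] apply (simp add: e1)
    using cont_of_der[OF K] apply (simp add: e2)
    using Gc apply simp
    apply (simp add: e1 partial1[OF D])
    apply (simp add: e2 partial2[OF D])
    apply (simp add: e1 partial2[OF G])
    done
qed


lemma fub:
  fixes \<psi> :: "real \<times> real \<Rightarrow> ennreal"
  assumes m[measurable]: "\<psi> \<in> borel_measurable (borel \<Otimes>\<^sub>M borel)" and I[measurable]: "I \<in> sets borel"
    and J[measurable]: "J \<in> sets borel"
  shows "(\<integral>\<^sup>+t. indicator I t * (\<integral>\<^sup>+s. indicator J s * \<psi> (t,s) \<partial>lborel) \<partial>lborel)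
       = (\<integral>\<^sup>+z. indicator (I \<times> J) z * \<psi> z \<partial>lborel)"
proof -
  have "(\<integral>\<^sup>+t. indicator I t * (\<integral>\<^sup>+s. indicator J s * \<psi> (t,s) \<partial>lborel) \<partial>lborel)
      = (\<integral>\<^sup>+t. (\<integral>\<^sup>+s. indicator I t * (indicator J s * \<psi> (t,s)) \<partial>lborel) \<partial>lborel)"
    by (rule nn_integral_cong, rule nn_integral_cmult[symmetric]) (unfold measurable_lborel2, measurable)
  also have "\<dots> = integral\<^sup>N (lborel \<Otimes>\<^sub>M lborel) (\<lambda>z. indicator (I \<times> J) z * \<psi> z)"
  proof -
    have meas: "(\<lambda>z. indicator (I \<times> J) z * \<psi> z) \<in> borel_measurable (lborel \<Otimes>\<^sub>M lborel)"
      unfolding lborel_prod measurable_lborel2 borel_prod[symmetric] by measurable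
    show ?thesis
      by (subst lborel.nn_integral_fst[OF meas, symmetric]) (simp add: indicator_times mult_ac)
  qed
  finally show ?thesis by (simp add: lborel_prod)
qed

lemma meas_P:
  fixes \<psi> :: "real \<times> real \<Rightarrow> ennreal"
  assumes m[measurable]: "\<psi> \<in> borel_measurable (borel \<Otimes>\<^sub>M borel)" and J[measurable]: "J \<in> sets borel"
  shows "(\<lambda>t. \<integral>\<^sup>+s. indicator J s * \<psi> (t,s) \<partial>lborel) \<in> borel_measurable lborel"
proof -
  have "(\<lambda>z. indicator J (snd z) * \<psi> z) \<in> borel_measurable (lborel \<Otimes>\<^sub>M lborel)"
    unfolding lborel_prod measurable_lborel2 borel_prod[symmetric] by measurable
  from lborel.borel_measurable_nn_integral_fst[OF this] show ?thesis by simp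
qed


definition NN :: "(real \<times> real) set \<Rightarrow> (real \<times> real \<Rightarrow> complex) \<Rightarrow> ennreal" where
  "NN R \<phi> = (\<integral>\<^sup>+z. indicator R z * ennreal ((cmod (\<phi> z))^2) \<partial>lborel)"

definition PP :: "real set \<Rightarrow> (real \<times> real \<Rightarrow> complex) \<Rightarrow> real \<Rightarrow> ennreal" where
  "PP J \<phi> t = (\<integral>\<^sup>+s. indicator J s * ennreal ((cmod (\<phi> (t,s)))^2) \<partial>lborel)"

lemma meas_sq:
  fixes \<phi> :: "real \<times> real \<Rightarrow> complex"
  assumes "continuous_on UNIV \<phi>"
  shows "(\<lambda>z. ennreal ((cmod (\<phi> z))^2)) \<in> borel_measurable (borel \<Otimes>\<^sub>M borel)"
proof -
  have [measurable]: "(\<lambda>z. (cmod (\<phi> z))^2) \<in> borel_measurable borel"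
    by (intro borel_measurable_continuous_onI continuous_intros assms)
  show ?thesis unfolding borel_prod by measurable
qed

lemma cont_slice1:
  fixes \<phi> :: "real \<times> real \<Rightarrow> complex"
  assumes "continuous_on UNIV \<phi>" shows "continuous_on UNIV (\<lambda>t. \<phi> (t,s))"
  by (rule continuous_on_compose2[OF assms]) (auto intro!: continuous_intros)

lemma cont_slice2:
  fixes \<phi> :: "real \<times> real \<Rightarrow> complex"
  assumes "continuous_on UNIV \<phi>" shows "continuous_on UNIV (\<lambda>s. \<phi> (t,s))"
  by (rule continuous_on_compose2[OF assms]) (auto intro!: continuous_intros)

lemma step2:
  fixes \<phi> \<psi> :: "real \<times> real \<Rightarrow> complex"
  assumes c\<phi>: "continuous_on UNIV \<phi>" and c\<psi>: "continuous_on UNIV \<psi>"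
    and D: "\<And>t s. ((\<lambda>s. \<phi> (t,s)) has_vector_derivative \<psi> (t,s)) (at s)"
    and l2: "0 < l2" and x2: "x2 \<in> {a2..a2+l2}"
  shows "(\<integral>\<^sup>+t. indicator {a1..<b1} t * ennreal ((cmod (\<phi> (t,x2)))^2) \<partial>lborel)
     \<le> ennreal (2/l2) * NN ({a1..<b1} \<times> {a2..<a2+l2}) \<phi> + ennreal l2 * NN ({a1..<b1} \<times> {a2..<a2+l2}) \<psi>"
proof -
  let ?I = "{a1..<b1}" and ?J = "{a2..<a2+l2}"
  have m\<phi>: "(\<lambda>z. ennreal ((cmod (\<phi> z))^2)) \<in> borel_measurable (borel \<Otimes>\<^sub>M borel)" by (rule meas_sq[OF c\<phi>])
  have m\<psi>: "(\<lambda>z. ennreal ((cmod (\<psi> z))^2)) \<in> borel_measurable (borel \<Otimes>\<^sub>M borel)" by (rule meas_sq[OF c\<psi>])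
  have P\<phi>: "(\<lambda>t. PP ?J \<phi> t) \<in> borel_measurable lborel"
    unfolding PP_def using meas_P[OF m\<phi>, of ?J] by simp
  have P\<psi>: "(\<lambda>t. PP ?J \<psi> t) \<in> borel_measurable lborel"
    unfolding PP_def using meas_P[OF m\<psi>, of ?J] by simp
  have "(\<integral>\<^sup>+t. indicator ?I t * ennreal ((cmod (\<phi> (t,x2)))^2) \<partial>lborel)
     \<le> (\<integral>\<^sup>+t. indicator ?I t * (ennreal (2/l2) * PP ?J \<phi> t + ennreal l2 * PP ?J \<psi> t) \<partial>lborel)"
  proof (rule nn_integral_mono, rule mult_left_mono)
    fix t
    have "ennreal ((cmod (\<phi> (t,x2)))^2) \<le>
       ennreal (2/((a2+l2)-a2)) * PP ?J \<phi> t + ennreal ((a2+l2)-a2) * PP ?J \<psi> t"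
      unfolding PP_def
      by (rule one_dim_nn[where g="\<lambda>s. \<phi> (t,s)" and g'="\<lambda>s. \<psi> (t,s)"])
         (use D cont_slice2[OF c\<psi>] l2 x2 in auto)
    thus "ennreal ((cmod (\<phi> (t,x2)))^2) \<le> ennreal (2/l2) * PP ?J \<phi> t + ennreal l2 * PP ?J \<psi> t"
      by simp
  qed simp
  also have "\<dots> = (\<integral>\<^sup>+t. ennreal (2/l2) * (indicator ?I t * PP ?J \<phi> t) + ennreal l2 * (indicator ?I t * PP ?J \<psi> t) \<partial>lborel)"
    by (simp add: distrib_left mult_ac)
  also have "\<dots> = ennreal (2/l2) * (\<integral>\<^sup>+t. indicator ?I t * PP ?J \<phi> t \<partial>lborel)
        + ennreal l2 * (\<integral>\<^sup>+t. indicator ?I t * PP ?J \<psi> t \<partial>lborel)"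
    using P\<phi> P\<psi> by (simp add: nn_integral_add nn_integral_cmult)
  also have "(\<integral>\<^sup>+t. indicator ?I t * PP ?J \<phi> t \<partial>lborel) = NN (?I \<times> ?J) \<phi>"
    unfolding PP_def NN_def by (rule fub[OF m\<phi>]) auto
  also have "(\<integral>\<^sup>+t. indicator ?I t * PP ?J \<psi> t \<partial>lborel) = NN (?I \<times> ?J) \<psi>"
    unfolding PP_def NN_def by (rule fub[OF m\<psi>]) auto
  finally show ?thesis .
qed

lemma two_dim:
  fixes f F1 F2 F12 :: "real \<times> real \<Rightarrow> complex"
  assumes cf: "continuous_on UNIV f" and c1: "continuous_on UNIV F1"
    and c2: "continuous_on UNIV F2" and c12: "continuous_on UNIV F12"
    and D1: "\<And>t s. ((\<lambda>t. f (t,s)) has_vector_derivative F1 (t,s)) (at t)"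
    and D2: "\<And>t s. ((\<lambda>s. f (t,s)) has_vector_derivative F2 (t,s)) (at s)"
    and D12: "\<And>t s. ((\<lambda>s. F1 (t,s)) has_vector_derivative F12 (t,s)) (at s)"
    and l1: "0 < l1" and l2: "0 < l2"
    and x1: "x1 \<in> {a1..a1+l1}" and x2: "x2 \<in> {a2..a2+l2}"
  shows "ennreal ((cmod (f (x1,x2)))^2) \<le>
     ennreal (2/l1) * (ennreal (2/l2) * NN ({a1..<a1+l1} \<times> {a2..<a2+l2}) f
                        + ennreal l2 * NN ({a1..<a1+l1} \<times> {a2..<a2+l2}) F2)
   + ennreal l1 * (ennreal (2/l2) * NN ({a1..<a1+l1} \<times> {a2..<a2+l2}) F1
                        + ennreal l2 * NN ({a1..<a1+l1} \<times> {a2..<a2+l2}) F12)"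
proof -
  have "ennreal ((cmod (f (x1,x2)))^2) \<le>
     ennreal (2/((a1+l1)-a1)) * (\<integral>\<^sup>+t. indicator {a1..<a1+l1} t * ennreal ((cmod (f (t,x2)))^2) \<partial>lborel)
   + ennreal ((a1+l1)-a1) * (\<integral>\<^sup>+t. indicator {a1..<a1+l1} t * ennreal ((cmod (F1 (t,x2)))^2) \<partial>lborel)"
    by (rule one_dim_nn[where g="\<lambda>t. f (t,x2)" and g'="\<lambda>t. F1 (t,x2)"])
       (use D1 cont_slice1[OF c1] l1 x1 in auto)
  also have "\<dots> \<le> ennreal (2/l1) * (ennreal (2/l2) * NN ({a1..<a1+l1} \<times> {a2..<a2+l2}) f
                        + ennreal l2 * NN ({a1..<a1+l1} \<times> {a2..<a2+l2}) F2)
   + ennreal l1 * (ennreal (2/l2) * NN ({a1..<a1+l1} \<times> {a2..<a2+l2}) F1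
                        + ennreal l2 * NN ({a1..<a1+l1} \<times> {a2..<a2+l2}) F12)"
    using step2[OF cf c2 D2 l2 x2, of a1 "a1+l1"] step2[OF c1 c12 D12 l2 x2, of a1 "a1+l1"]
    by (auto intro!: add_mono mult_left_mono)
  finally show ?thesis .
qed


lemma floor_char:
  fixes l x :: real assumes l: "l > 0"
  shows "(l * of_int k - l/2 \<le> x \<and> x < l * of_int k + l/2) \<longleftrightarrow> k = \<lfloor>x/l + 1/2\<rfloor>"
proof -
  have "(l * of_int k - l/2 \<le> x) \<longleftrightarrow> of_int k \<le> x/l + 1/2"
    using l by (simp add: field_simps)
  moreover have "(x < l * of_int k + l/2) \<longleftrightarrow> x/l + 1/2 < of_int k + 1"
    using l by (simp add: field_simps)
  ultimately show ?thesis by (metis floor_eq_iff)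
qed

lemma Qa_mem:
  assumes "l1 > 0" "l2 > 0"
  shows "z \<in> Qa l1 l2 \<alpha> \<longleftrightarrow> \<alpha> = (\<lfloor>fst z/l1 + 1/2\<rfloor>, \<lfloor>snd z/l2 + 1/2\<rfloor>)"
  using floor_char[OF assms(1), of "fst \<alpha>" "fst z"] floor_char[OF assms(2), of "snd \<alpha>" "snd z"]
  by (cases z; cases \<alpha>) (auto simp: Qa_def)

lemma Qa_eq:
  "Qa l1 l2 \<alpha> = {l1 * of_int (fst \<alpha>) - l1/2..<(l1 * of_int (fst \<alpha>) - l1/2) + l1}
     \<times> {l2 * of_int (snd \<alpha>) - l2/2..<(l2 * of_int (snd \<alpha>) - l2/2) + l2}"
  by (auto simp: Qa_def)

lemma sum_Qa:
  fixes g :: "real \<times> real \<Rightarrow> ennreal"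
  assumes l1: "l1 > 0" and l2: "l2 > 0" and g[measurable]: "g \<in> borel_measurable (borel \<Otimes>\<^sub>M borel)"
  shows "(\<integral>\<^sup>+\<alpha>. (\<integral>\<^sup>+z. indicator (Qa l1 l2 \<alpha>) z * g z \<partial>lborel) \<partial>count_space (UNIV :: (int \<times> int) set))
       = (\<integral>\<^sup>+z. g z \<partial>lborel)"
proof -
  interpret P: pair_sigma_finite "count_space (UNIV :: (int \<times> int) set)" lborel
    by (intro pair_sigma_finite.intro sigma_finite_measure_count_space sigma_finite_lborel)
  have m: "(\<lambda>(\<alpha>, z). indicator (Qa l1 l2 \<alpha>) z * g z) \<in> borel_measurable (count_space UNIV \<Otimes>\<^sub>M lborel)"
  proof (rule measurable_pair_measure_countable1)
    fix \<alpha> :: "int \<times> int"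
    show "(\<lambda>y. case (\<alpha>, y) of (\<alpha>, z) \<Rightarrow> indicator (Qa l1 l2 \<alpha>) z * g z) \<in> borel_measurable lborel"
      unfolding Qa_eq measurable_lborel2 borel_prod[symmetric] by simp measurable
  qed simp
  have "(\<integral>\<^sup>+\<alpha>. (\<integral>\<^sup>+z. indicator (Qa l1 l2 \<alpha>) z * g z \<partial>lborel) \<partial>count_space UNIV)
     = (\<integral>\<^sup>+z. (\<integral>\<^sup>+\<alpha>. indicator (Qa l1 l2 \<alpha>) z * g z \<partial>count_space UNIV) \<partial>lborel)"
    using P.Fubini'[OF m] by simp
  also have "\<dots> = (\<integral>\<^sup>+z. g z \<partial>lborel)"
  proof (rule nn_integral_cong)
    fix z :: "real \<times> real"
    let ?a = "(\<lfloor>fst z/l1 + 1/2\<rfloor>, \<lfloor>snd z/l2 + 1/2\<rfloor>)"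
    have "(\<lambda>\<alpha>. indicator (Qa l1 l2 \<alpha>) z * g z) = (\<lambda>\<alpha>. g z * indicator {?a} \<alpha>)"
      using Qa_mem[OF l1 l2] by (auto simp: indicator_def)
    hence "(\<integral>\<^sup>+\<alpha>. indicator (Qa l1 l2 \<alpha>) z * g z \<partial>count_space UNIV) = g z * emeasure (count_space UNIV) {?a}"
      by (simp add: nn_integral_cmult_indicator)
    thus "(\<integral>\<^sup>+\<alpha>. indicator (Qa l1 l2 \<alpha>) z * g z \<partial>count_space UNIV) = g z" by simp
  qed
  finally show ?thesis .
qed

lemma arith_fin:
  fixes A B C D :: ennreal and l1 l2 :: real
  assumes l1: "l1 > 0" and l2: "l2 > 0"
  shows "ennreal (2/l1) * (ennreal (2/l2) * A + ennreal l2 * B) + ennreal l1 * (ennreal (2/l2) * C + ennreal l2 * D)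
    \<le> ennreal 4 * (ennreal (l1/l2) * C + ennreal (l1*l2) * D + ennreal (l2/l1) * B + ennreal (1/(l1*l2)) * A)"
proof -
  have L: "ennreal (2/l1) * (ennreal (2/l2) * A + ennreal l2 * B) + ennreal l1 * (ennreal (2/l2) * C + ennreal l2 * D)
     = ennreal (4/(l1*l2)) * A + ennreal (2*(l2/l1)) * B + ennreal (l1*(2/l2)) * C + ennreal (l1*l2) * D"
    using l1 l2 by (simp add: distrib_left mult.assoc[symmetric] ennreal_mult[symmetric] add_ac)
  have R: "ennreal 4 * (ennreal (l1/l2) * C + ennreal (l1*l2) * D + ennreal (l2/l1) * B + ennreal (1/(l1*l2)) * A)
     = ennreal (4/(l1*l2)) * A + ennreal (4*(l2/l1)) * B + ennreal (4*(l1/l2)) * C + ennreal (4*(l1*l2)) * D"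
  proof -
    have q: "\<And>x. 0 \<le> x \<Longrightarrow> (4::ennreal) * ennreal x = ennreal (4*x)"
      by (simp add: ennreal_mult)
    have q2: "\<And>x (Z::ennreal). 0 \<le> x \<Longrightarrow> 4 * (ennreal x * Z) = ennreal (4*x) * Z"
      by (simp add: q mult.assoc[symmetric])
    show ?thesis using l1 l2 by (simp add: distrib_left q2 add_ac)
  qed
  show ?thesis unfolding L R
    using l1 l2 by (intro add_mono mult_right_mono ennreal_leI order_refl) (auto simp: divide_right_mono)
qed

theorem mainTheorem3:
  "\<exists>C::real. C > 0 \<and>
    (\<forall>(a1::real) b1 a2 b2 (f :: real \<times> real \<Rightarrow> complex) (I1::real set) (I2::real set).
      a1 < b1 \<longrightarrow> a2 < b2 \<longrightarrow>
      {a1<..<b1} \<subseteq> I1 \<longrightarrow> I1 \<subseteq> {a1..b1} \<longrightarrow>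
      {a2<..<b2} \<subseteq> I2 \<longrightarrow> I2 \<subseteq> {a2..b2} \<longrightarrow>
      smooth f \<longrightarrow>
      (let l1 = b1 - a1; l2 = b2 - a2 in
        (\<integral>\<^sup>+ \<alpha>. (SUP x\<in>Qa l1 l2 \<alpha>. ennreal ((cmod (f x))\<^sup>2)) \<partial>count_space (UNIV :: (int \<times> int) set))
        \<le> ennreal C *
          ( ennreal (l1 / l2) * (\<integral>\<^sup>+ x. ennreal ((cmod (d1 f x))\<^sup>2) \<partial>lborel)
          + ennreal (l1 * l2) * (\<integral>\<^sup>+ x. ennreal ((cmod (d2 (d1 f) x))\<^sup>2) \<partial>lborel)
          + ennreal (l2 / l1) * (\<integral>\<^sup>+ x. ennreal ((cmod (d2 f x))\<^sup>2) \<partial>lborel)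
          + ennreal (1 / (l1 * l2)) * (\<integral>\<^sup>+ x. ennreal ((cmod (f x))\<^sup>2) \<partial>lborel))))"
proof (rule exI[of _ 4], intro conjI allI impI)
  fix a1 b1 a2 b2 :: real and f :: "real \<times> real \<Rightarrow> complex" and I1 I2 :: "real set"
  assume ab1: "a1 < b1" and ab2: "a2 < b2" and sm: "smooth f"
  define l1 where "l1 = b1 - a1"
  define l2 where "l2 = b2 - a2"
  have l1: "l1 > 0" and l2: "l2 > 0" using ab1 ab2 by (auto simp: l1_def l2_def)
  note SP = smooth_props[OF sm]
  have cf: "continuous_on UNIV f" and c1: "continuous_on UNIV (d1 f)"
    and c2: "continuous_on UNIV (d2 f)" and c12: "continuous_on UNIV (d2 (d1 f))"
    and D1: "\<And>t s. ((\<lambda>t. f (t,s)) has_vector_derivative d1 f (t,s)) (at t)"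
    and D2: "\<And>t s. ((\<lambda>s. f (t,s)) has_vector_derivative d2 f (t,s)) (at s)"
    and D12: "\<And>t s. ((\<lambda>s. d1 f (t,s)) has_vector_derivative d2 (d1 f) (t,s)) (at s)"
    using SP by auto
  define B where "B \<alpha> = ennreal (2/l1) * (ennreal (2/l2) * NN (Qa l1 l2 \<alpha>) f
                        + ennreal l2 * NN (Qa l1 l2 \<alpha>) (d2 f))
   + ennreal l1 * (ennreal (2/l2) * NN (Qa l1 l2 \<alpha>) (d1 f)
                        + ennreal l2 * NN (Qa l1 l2 \<alpha>) (d2 (d1 f)))" for \<alpha>
  have supB: "(SUP x\<in>Qa l1 l2 \<alpha>. ennreal ((cmod (f x))\<^sup>2)) \<le> B \<alpha>" for \<alpha>
  proof (rule SUP_least)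
    fix x assume x: "x \<in> Qa l1 l2 \<alpha>"
    obtain x1 x2 where xx: "x = (x1, x2)" by (cases x)
    let ?A1 = "l1 * of_int (fst \<alpha>) - l1/2" and ?A2 = "l2 * of_int (snd \<alpha>) - l2/2"
    have x1: "x1 \<in> {?A1..?A1+l1}" and x2: "x2 \<in> {?A2..?A2+l2}"
      using x unfolding xx Qa_eq by auto
    show "ennreal ((cmod (f x))\<^sup>2) \<le> B \<alpha>"
      unfolding xx B_def Qa_eq
      by (rule two_dim[OF cf c1 c2 c12 D1 D2 D12 l1 l2 x1 x2])
  qed
  define M where "M (\<phi>::real\<times>real\<Rightarrow>complex) = (\<integral>\<^sup>+ x. ennreal ((cmod (\<phi> x))\<^sup>2) \<partial>lborel)" for \<phi>
  have sumN: "(\<integral>\<^sup>+\<alpha>. NN (Qa l1 l2 \<alpha>) \<phi> \<partial>count_space UNIV) = M \<phi>" if "continuous_on UNIV \<phi>" for \<phi>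
    unfolding NN_def M_def by (rule sum_Qa[OF l1 l2 meas_sq[OF that]])
  have "(\<integral>\<^sup>+ \<alpha>. (SUP x\<in>Qa l1 l2 \<alpha>. ennreal ((cmod (f x))\<^sup>2)) \<partial>count_space (UNIV :: (int \<times> int) set))
     \<le> (\<integral>\<^sup>+ \<alpha>. B \<alpha> \<partial>count_space UNIV)"
    by (rule nn_integral_mono) (rule supB)
  also have "\<dots> = ennreal (2/l1) * (ennreal (2/l2) * M f + ennreal l2 * M (d2 f))
     + ennreal l1 * (ennreal (2/l2) * M (d1 f) + ennreal l2 * M (d2 (d1 f)))"
    unfolding B_def
    by (simp add: nn_integral_add nn_integral_cmult sumN cf c1 c2 c12)
  also have "\<dots> \<le> ennreal 4 * (ennreal (l1/l2) * M (d1 f) + ennreal (l1*l2) * M (d2 (d1 f))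
        + ennreal (l2/l1) * M (d2 f) + ennreal (1/(l1*l2)) * M f)"
    by (rule arith_fin[OF l1 l2])
  finally show "let l1 = b1 - a1; l2 = b2 - a2 in
        (\<integral>\<^sup>+ \<alpha>. (SUP x\<in>Qa l1 l2 \<alpha>. ennreal ((cmod (f x))\<^sup>2)) \<partial>count_space (UNIV :: (int \<times> int) set))
        \<le> ennreal 4 *
          ( ennreal (l1 / l2) * (\<integral>\<^sup>+ x. ennreal ((cmod (d1 f x))\<^sup>2) \<partial>lborel)
          + ennreal (l1 * l2) * (\<integral>\<^sup>+ x. ennreal ((cmod (d2 (d1 f) x))\<^sup>2) \<partial>lborel)
          + ennreal (l2 / l1) * (\<integral>\<^sup>+ x. ennreal ((cmod (d2 f x))\<^sup>2) \<partial>lborel)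
          + ennreal (1 / (l1 * l2)) * (\<integral>\<^sup>+ x. ennreal ((cmod (f x))\<^sup>2) \<partial>lborel))"
    unfolding Let_def M_def l1_def l2_def .
qed simp

end
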